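(* Let $G$ be a finitely generated group which is virtually $\mathbb{Z}$, i.e. $G$ has a subgroup of finite index isomorphic to $\mathbb{Z}$. Let $A$ be a finite alphabet and let $\Phi:A^G\to A^G$ be a cellular automaton on $G$. Then $\Phi$ is sensitive to initial conditions if and only if $\Phi$ has no equicontinuity point.
   Context: Let $E$ be a finite generating set of $G$ closed under inverses, $d_E$ the associated word metric on $G$, and $B_G(g,k)$ the closed ball of radius $k$ in $d_E$. Configurations are elements of $A^G$; $G$ acts on them by $(gx)(h)=x(g^{-1}h)$. The Cantor metric on $A^G$ is $d^E(x,y)=2^{-k}$ where $k=\min\{d_E(1_G,g): x(g)\neq y(g)\}$ (and $d^E(x,x)=0$); $B^E(x,r)$ denotes the closed ball in this metric. A cellular automaton (CA) on $G$ with alphabet $A$ is a map $\Phi:A^G\to A^G$ for which there are a finite set $S\subseteq G$ and a map $\mu:A^S\to A$ with $\Phi(x)(g)=\mu((g^{-1}x)|_S)$ for all $x,g$, i.e. $\Phi(x)(g)=\mu(s\mapsto x(gs))$. A configuration $x$ is an equicontinuity point of $\Phi$ if for every $\epsilon>0$ there is $\delta>0$ such that for all $t\in\mathbb{N}$, $\Phi^t(B^E(x,\delta))\subseteq B^E(\Phi^t(x),\epsilon)$. $\Phi$ is sensitive to initial conditions if there is $\epsilon>0$ such that for every $x\in A^G$ and every $\delta>0$ there exist $t\in\mathbb{N}$ and $y\in B^E(x,\delta)$ with $\Phi^t(y)\notin B^E(\Phi^t(x),\epsilon)$. (These notions do not depend on the choice of the finite generating set $E$.) *)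

theory Defs
  imports Complex_Main
begin

text \<open>The group G is a type of class group_add (written additively: + is the
group law, 0 the identity, uminus the inverse; commutativity is NOT assumed).
Configurations are functions 'g => 'a.\<close>

inductive_set gen_subgroup :: "'g::group_add set \<Rightarrow> 'g set" for E where
  zero: "0 \<in> gen_subgroup E"
| gen: "e \<in> E \<Longrightarrow> e \<in> gen_subgroup E"
| add: "x \<in> gen_subgroup E \<Longrightarrow> y \<in> gen_subgroup E \<Longrightarrow> x + y \<in> gen_subgroup E"
| inv: "x \<in> gen_subgroup E \<Longrightarrow> - x \<in> gen_subgroup E"

definition fin_sym_gen_set :: "'g::group_add set \<Rightarrow> bool" where
  "fin_sym_gen_set E \<longleftrightarrow> finite E \<and> (\<forall>e\<in>E. - e \<in> E) \<and> gen_subgroup E = UNIV"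

definition is_subgroup :: "'g::group_add set \<Rightarrow> bool" where
  "is_subgroup H \<longleftrightarrow> 0 \<in> H \<and> (\<forall>x\<in>H. \<forall>y\<in>H. x + y \<in> H) \<and> (\<forall>x\<in>H. - x \<in> H)"

definition finite_index :: "'g::group_add set \<Rightarrow> bool" where
  "finite_index H \<longleftrightarrow> finite {(\<lambda>h. g + h) ` H | g. True}"

definition virtually_Z :: "'g::group_add itself \<Rightarrow> bool" where
  "virtually_Z _ \<longleftrightarrow> (\<exists>H::'g set. is_subgroup H \<and> finite_index H \<and>
      (\<exists>f :: int \<Rightarrow> 'g. bij_betw f UNIV H \<and> (\<forall>a b. f (a + b) = f a + f b)))"

definition word_len :: "'g::group_add set \<Rightarrow> 'g \<Rightarrow> nat" where
  "word_len E g = (LEAST n. \<exists>xs. set xs \<subseteq> E \<and> length xs = n \<and> sum_list xs = g)"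

definition cdist :: "'g::group_add set \<Rightarrow> ('g \<Rightarrow> 'a) \<Rightarrow> ('g \<Rightarrow> 'a) \<Rightarrow> real" where
  "cdist E x y = (if x = y then 0 else
     (1/2) ^ (LEAST k. \<exists>g. x g \<noteq> y g \<and> word_len E g = k))"

definition cball_conf :: "'g::group_add set \<Rightarrow> ('g \<Rightarrow> 'a) \<Rightarrow> real \<Rightarrow> ('g \<Rightarrow> 'a) set" where
  "cball_conf E x r = {y. cdist E x y \<le> r}"

definition is_CA :: "(('g::group_add \<Rightarrow> 'a) \<Rightarrow> ('g \<Rightarrow> 'a)) \<Rightarrow> bool" where
  "is_CA \<Phi> \<longleftrightarrow> (\<exists>S::'g set. \<exists>\<mu>::('g \<Rightarrow> 'a) \<Rightarrow> 'a. finite S \<and>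
     (\<forall>x g. \<Phi> x g = \<mu> (\<lambda>s. if s \<in> S then x (g + s) else undefined)))"

definition equicont_point :: "'g::group_add set \<Rightarrow> (('g \<Rightarrow> 'a) \<Rightarrow> ('g \<Rightarrow> 'a)) \<Rightarrow> ('g \<Rightarrow> 'a) \<Rightarrow> bool" where
  "equicont_point E \<Phi> x \<longleftrightarrow> (\<forall>\<epsilon>>0. \<exists>\<delta>>0. \<forall>t::nat.
     (\<Phi> ^^ t) ` cball_conf E x \<delta> \<subseteq> cball_conf E ((\<Phi> ^^ t) x) \<epsilon>)"

definition sensitive :: "'g::group_add set \<Rightarrow> (('g \<Rightarrow> 'a) \<Rightarrow> ('g \<Rightarrow> 'a)) \<Rightarrow> bool" where
  "sensitive E \<Phi> \<longleftrightarrow> (\<exists>\<epsilon>>0. \<forall>x. \<forall>\<delta>>0. \<exists>t::nat. \<exists>y\<in>cball_conf E x \<delta>.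
     (\<Phi> ^^ t) y \<notin> cball_conf E ((\<Phi> ^^ t) x) \<epsilon>)"

end

theory Submission
  imports Defs
begin

definition agreeB :: "'g::group_add set \<Rightarrow> nat \<Rightarrow> ('g \<Rightarrow> 'a) \<Rightarrow> ('g \<Rightarrow> 'a) \<Rightarrow> bool" where
  "agreeB E k x y \<longleftrightarrow> (\<forall>g. word_len E g < k \<longrightarrow> x g = y g)"

lemma cdist_le_iff: "cdist E x y \<le> (1/2)^k \<longleftrightarrow> agreeB E k x y"
proof (cases "x = y")
  case True thus ?thesis by (simp add: cdist_def agreeB_def)
next
  case False
  define L where "L = (LEAST k. \<exists>g. x g \<noteq> y g \<and> word_len E g = k)"
  have ex: "\<exists>k g. x g \<noteq> y g \<and> word_len E g = k" using False by auto
  have "cdist E x y = (1/2)^L" using False by (simp add: cdist_def L_def)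
  hence "cdist E x y \<le> (1/2)^k \<longleftrightarrow> k \<le> L" by simp
  also have "\<dots> \<longleftrightarrow> agreeB E k x y"
  proof
    assume "k \<le> L"
    show "agreeB E k x y" unfolding agreeB_def
    proof (intro allI impI, rule ccontr)
      fix g assume "word_len E g < k" "x g \<noteq> y g"
      hence "L \<le> word_len E g" unfolding L_def by (intro Least_le) auto
      thus False using \<open>k \<le> L\<close> \<open>word_len E g < k\<close> by simp
    qed
  next
    assume a: "agreeB E k x y"
    obtain g where "x g \<noteq> y g \<and> word_len E g = L" unfolding L_def
      using LeastI_ex[OF ex] by blast
    thus "k \<le> L" using a unfolding agreeB_def by (metis not_le)
  qed
  finally show ?thesis .
qed

lemma sum_list_rev_uminus: "sum_list (rev (map uminus xs)) = - sum_list (xs :: 'g::group_add list)"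
  by (induct xs) (simp_all add: minus_add)

lemma gen_lists:
  assumes "\<forall>e\<in>E. - e \<in> E" "g \<in> gen_subgroup E"
  shows "\<exists>xs. set xs \<subseteq> E \<and> sum_list xs = (g::'g::group_add)"
  using assms(2)
proof induct
  case zero show ?case by (intro exI[of _ "[]"]) simp
next
  case (gen e) thus ?case by (intro exI[of _ "[e]"]) simp
next
  case (add x y)
  then obtain xs ys where "set xs \<subseteq> E \<and> sum_list xs = x" "set ys \<subseteq> E \<and> sum_list ys = y" by blast
  thus ?case by (intro exI[of _ "xs @ ys"]) auto
next
  case (inv x)
  then obtain xs where "set xs \<subseteq> E \<and> sum_list xs = x" by blast
  thus ?case using assms(1) by (intro exI[of _ "rev (map uminus xs)"]) (auto simp: sum_list_rev_uminus)
qed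

lemma finite_ballset:
  assumes "fin_sym_gen_set E"
  shows "finite {g::'g::group_add. word_len E g < k}"
proof -
  have sub: "{g. word_len E g < k} \<subseteq> sum_list ` {xs. set xs \<subseteq> E \<and> length xs \<le> k}"
  proof
    fix g assume "g \<in> {g. word_len E g < k}"
    hence lt: "word_len E g < k" by simp
    have "\<exists>xs. set xs \<subseteq> E \<and> sum_list xs = g" using assms gen_lists unfolding fin_sym_gen_set_def by blast
    hence "\<exists>n xs. set xs \<subseteq> E \<and> length xs = n \<and> sum_list xs = g" by blast
    from LeastI_ex[OF this] obtain xs where "set xs \<subseteq> E \<and> length xs = word_len E g \<and> sum_list xs = g"
      unfolding word_len_def by blast
    thus "g \<in> sum_list ` {xs. set xs \<subseteq> E \<and> length xs \<le> k}" using lt by force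
  qed
  have "finite E" using assms unfolding fin_sym_gen_set_def by simp
  hence "finite {xs. set xs \<subseteq> E \<and> length xs \<le> k}" by (rule finite_lists_length_le)
  thus ?thesis using sub finite_subset by blast
qed

lemma finite_in_ball: "finite F \<Longrightarrow> \<exists>k. \<forall>g\<in>F. word_len E g < k"
proof (induct rule: finite_induct)
  case empty show ?case by simp
next
  case (insert a F)
  then obtain k where "\<forall>g\<in>F. word_len E g < k" by blast
  thus ?case by (intro exI[of _ "max k (Suc (word_len E a))"]) auto
qed

lemma CA_local:
  fixes \<Phi> :: "('g::group_add \<Rightarrow> 'a) \<Rightarrow> ('g \<Rightarrow> 'a)"
  assumes "\<forall>x g. \<Phi> x g = \<mu> (\<lambda>s. if s \<in> S then x (g + s) else undefined)"
    and "\<forall>s\<in>S. x (g + s) = y (g + s)"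
  shows "\<Phi> x g = \<Phi> y g"
proof -
  have "(\<lambda>s. if s \<in> S then x (g + s) else undefined) = (\<lambda>s. if s \<in> S then y (g + s) else undefined)"
    using assms(2) by auto
  thus ?thesis using assms(1) by metis
qed

lemma CA_shift:
  fixes \<Phi> :: "('g::group_add \<Rightarrow> 'a) \<Rightarrow> ('g \<Rightarrow> 'a)"
  assumes "\<forall>x g. \<Phi> x g = \<mu> (\<lambda>s. if s \<in> S then x (g + s) else undefined)"
  shows "\<Phi> (\<lambda>g. x (a + g)) = (\<lambda>g. \<Phi> x (a + g))"
proof (rule ext)
  fix g
  have "\<Phi> (\<lambda>g. x (a + g)) g = \<mu> (\<lambda>s. if s \<in> S then x (a + (g + s)) else undefined)"
    using assms by simp
  also have "\<dots> = \<mu> (\<lambda>s. if s \<in> S then x (a + g + s) else undefined)" by (simp only: add.assoc)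
  also have "\<dots> = \<Phi> x (a + g)" using assms by metis
  finally show "\<Phi> (\<lambda>g. x (a + g)) g = \<Phi> x (a + g)" .
qed

lemma CA_shift_pow:
  fixes \<Phi> :: "('g::group_add \<Rightarrow> 'a) \<Rightarrow> ('g \<Rightarrow> 'a)"
  assumes "\<forall>x g. \<Phi> x g = \<mu> (\<lambda>s. if s \<in> S then x (g + s) else undefined)"
  shows "(\<Phi> ^^ t) (\<lambda>g. x (a + g)) = (\<lambda>g. (\<Phi> ^^ t) x (a + g))"
proof (induct t)
  case 0 show ?case by (simp add: id_def)
next
  case (Suc t)
  show ?case using CA_shift[OF assms, of "(\<Phi> ^^ t) x" a] Suc by simp
qed

locale vz =
  fixes H :: "'g::group_add set" and f :: "int \<Rightarrow> 'g"
  assumes sub: "is_subgroup H" and fi: "finite_index H"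
    and bij: "bij_betw f UNIV H" and hom: "\<And>a b. f (a + b) = f a + f b"
begin

definition rep :: "'g \<Rightarrow> 'g" where
  "rep g = - (SOME c. c \<in> (\<lambda>h. -g + h) ` H)"

definition lvl :: "'g \<Rightarrow> int" where
  "lvl g = inv_into UNIV f (g - rep g)"

lemma f0: "f 0 = 0"
proof -
  have "f 0 + 0 = f 0 + f 0" using hom[of 0 0] by simp
  thus ?thesis by (metis add_left_cancel)
qed

lemma fH: "f n \<in> H" using bij unfolding bij_betw_def by auto

lemma rangef: "range f = H" using bij unfolding bij_betw_def by auto

lemma finj: "inj f" using bij unfolding bij_betw_def by auto

lemma H0: "0 \<in> H" and Hadd: "x \<in> H \<Longrightarrow> y \<in> H \<Longrightarrow> x + y \<in> H" and Hminus: "x \<in> H \<Longrightarrow> - x \<in> H"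
  using sub unfolding is_subgroup_def by auto

lemma rep_prop: "g - rep g \<in> H"
proof -
  have "(SOME c. c \<in> (\<lambda>h. -g + h) ` H) \<in> (\<lambda>h. -g + h) ` H"
    by (rule someI_ex) (use H0 in blast)
  then obtain h0 where h0: "h0 \<in> H" "(SOME c. c \<in> (\<lambda>h. -g + h) ` H) = -g + h0" by blast
  have "g - rep g = h0" unfolding rep_def h0(2) by (simp add: add.assoc)
  thus ?thesis using h0 by simp
qed

lemma rep_shift: assumes "h1 \<in> H" shows "rep (h1 + g) = rep g"
proof -
  have "(\<lambda>h. -(h1 + g) + h) ` H = (\<lambda>h. -g + h) ` H"
  proof
    show "(\<lambda>h. -(h1 + g) + h) ` H \<subseteq> (\<lambda>h. -g + h) ` H"
    proof
      fix y assume "y \<in> (\<lambda>h. -(h1 + g) + h) ` H"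
      then obtain h where "h \<in> H" "y = -(h1 + g) + h" by blast
      moreover have "-(h1 + g) + h = -g + (-h1 + h)" by (simp only: minus_add add.assoc)
      ultimately have "y = -g + (-h1 + h)" "-h1 + h \<in> H" using assms Hadd Hminus by auto
      thus "y \<in> (\<lambda>h. -g + h) ` H" by blast
    qed
  next
    show "(\<lambda>h. -g + h) ` H \<subseteq> (\<lambda>h. -(h1 + g) + h) ` H"
    proof
      fix y assume "y \<in> (\<lambda>h. -g + h) ` H"
      then obtain h where "h \<in> H" "y = -g + h" by blast
      moreover have "-(h1 + g) + (h1 + h) = -g + h" by (simp only: minus_add add.assoc minus_add_cancel)
      ultimately have "y = -(h1 + g) + (h1 + h)" "h1 + h \<in> H" using assms Hadd by auto
      thus "y \<in> (\<lambda>h. -(h1 + g) + h) ` H" by blast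
    qed
  qed
  thus ?thesis unfolding rep_def by simp
qed

lemma f_lvl: "f (lvl g) = g - rep g"
  unfolding lvl_def using rep_prop rangef by (metis f_inv_into_f)

lemma decomp: "g = f (lvl g) + rep g"
  by (simp add: f_lvl)

lemma lvl_f: "lvl (f p + g) = p + lvl g"
proof -
  have "f (lvl (f p + g)) = f p + g - rep g" using f_lvl rep_shift[OF fH] by simp
  also have "\<dots> = f p + f (lvl g)" by (simp add: f_lvl add_diff_eq)
  also have "\<dots> = f (p + lvl g)" by (simp add: hom)
  finally show ?thesis using finj by (simp add: inj_eq)
qed

lemma lvl_add: "lvl (g + s) = lvl g + lvl (rep g + s)"
proof -
  have "g + s = f (lvl g) + (rep g + s)" by (subst decomp[of g]) (simp add: add.assoc)
  thus ?thesis using lvl_f by metis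
qed

lemma finite_rep: "finite (range rep)"
proof -
  have "range rep \<subseteq> (\<lambda>X. - (SOME c. c \<in> X)) ` {(\<lambda>h. g + h) ` H | g. True}"
    unfolding rep_def by blast
  moreover have "finite {(\<lambda>h. g + h) ` H | g. True}" using fi unfolding finite_index_def .
  ultimately show ?thesis using finite_subset by blast
qed

lemma finite_slab: "finite {g. a \<le> lvl g \<and> lvl g \<le> b}"
proof -
  have "{g. a \<le> lvl g \<and> lvl g \<le> b} \<subseteq> (\<lambda>(n, c). f n + c) ` ({a..b} \<times> range rep)"
  proof
    fix g assume "g \<in> {g. a \<le> lvl g \<and> lvl g \<le> b}"
    thus "g \<in> (\<lambda>(n, c). f n + c) ` ({a..b} \<times> range rep)"
      using decomp[of g] by (intro image_eqI[of _ _ "(lvl g, rep g)"]) auto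
  qed
  moreover have "finite ((\<lambda>(n, c). f n + c) ` ({a..b} \<times> range rep))"
    using finite_rep by simp
  ultimately show ?thesis using finite_subset by blast
qed

lemma finite_bdd: "finite F \<Longrightarrow> \<exists>Q\<ge>0. \<forall>g\<in>F. \<bar>lvl g\<bar> \<le> Q"
proof (induct rule: finite_induct)
  case empty show ?case by auto
next
  case (insert a F)
  then obtain Q where "Q \<ge> 0" "\<forall>g\<in>F. \<bar>lvl g\<bar> \<le> Q" by blast
  thus ?case by (intro exI[of _ "max Q \<bar>lvl a\<bar>"]) auto
qed

lemma lip:
  assumes "finite S"
  shows "\<exists>R\<ge>1. \<forall>g. \<forall>s\<in>S. \<bar>lvl (g + s) - lvl g\<bar> \<le> R"
proof -
  have "finite ((\<lambda>(c, s). rep c + s) ` (UNIV \<times> S))"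
  proof -
    have "(\<lambda>(c, s). rep c + s) ` (UNIV \<times> S) = (\<lambda>(c, s). c + s) ` (range rep \<times> S)" by auto
    thus ?thesis using finite_rep assms by simp
  qed
  from finite_bdd[OF this] obtain Q where Q: "Q \<ge> 0" "\<forall>g\<in>(\<lambda>(c, s). rep c + s) ` (UNIV \<times> S). \<bar>lvl g\<bar> \<le> Q"
    by blast
  show ?thesis
  proof (intro exI[of _ "Q + 1"] conjI allI ballI)
    show "1 \<le> Q + 1" using Q by simp
    fix g s assume "s \<in> S"
    hence "\<bar>lvl (rep g + s)\<bar> \<le> Q" using Q by auto
    thus "\<bar>lvl (g + s) - lvl g\<bar> \<le> Q + 1" using lvl_add[of g s] by simp
  qed
qed

end

context vz begin

lemma f_cancel: "f (- p) + (f p + g) = g" "f p + (f (- p) + g) = g"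
proof -
  have "f (- p) + (f p + g) = f (- p + p) + g" by (simp only: hom add.assoc)
  thus "f (- p) + (f p + g) = g" by (simp add: f0)
  have "f p + (f (- p) + g) = f (p + - p) + g" by (simp only: hom add.assoc)
  thus "f p + (f (- p) + g) = g" by (simp add: f0)
qed

lemma construct:
  fixes \<Phi> :: "('g \<Rightarrow> 'a) \<Rightarrow> ('g \<Rightarrow> 'a)"
  assumes CA: "\<forall>x g. \<Phi> x g = \<mu> (\<lambda>s. if s \<in> S then x (g + s) else undefined)"
    and R: "\<forall>g. \<forall>s\<in>S. \<bar>lvl (g + s) - lvl g\<bar> \<le> R" and R1: "R \<ge> 1" and MR: "M \<ge> R"
    and blk: "\<forall>t y. (\<forall>g. -M \<le> lvl g \<and> lvl g \<le> M \<longrightarrow> y g = x g) \<longrightarrow>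
                (\<forall>g. 0 \<le> lvl g \<and> lvl g \<le> R - 1 \<longrightarrow> (\<Phi> ^^ t) y g = (\<Phi> ^^ t) x g)"
  shows "\<exists>z. \<forall>Q. \<exists>F'. finite F' \<and> (\<forall>t y. (\<forall>g\<in>F'. y g = z g) \<longrightarrow>
            (\<forall>g. \<bar>lvl g\<bar> \<le> Q \<longrightarrow> (\<Phi> ^^ t) y g = (\<Phi> ^^ t) z g))"
proof -
  define P where "P = 2 * M + 1"
  have P1: "P \<ge> 1" using MR R1 unfolding P_def by simp
  define z where "z g = x (f (- P * ((lvl g + M) div P)) + g)" for g
  have zblk: "z (f (P * q) + g) = x g" if "-M \<le> lvl g" "lvl g \<le> M" for q g
  proof -
    have l: "lvl (f (P * q) + g) = P * q + lvl g" by (rule lvl_f)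
    have d0: "(lvl g + M) div P = 0" using that unfolding P_def by (intro div_pos_pos_trivial) auto
    have e: "P * q + lvl g + M = (lvl g + M) + q * P" by (simp add: algebra_simps)
    have "(P * q + lvl g + M) div P = ((lvl g + M) + q * P) div P" by (simp only: e)
    also have "\<dots> = q + (lvl g + M) div P" by (rule div_mult_self1) (use P1 in simp)
    finally have "(P * q + lvl g + M) div P = q" using d0 by simp
    hence "(lvl (f (P * q) + g) + M) div P = q" using l P1 by (simp add: add.assoc)
    thus ?thesis unfolding z_def using f_cancel(1)[of "P * q" g] by simp
  qed
  have shiftblk: "(\<Phi> ^^ t) y g' = (\<Phi> ^^ t) x (f (- p) + g')"
    if yb: "\<forall>g. -M \<le> lvl g \<and> lvl g \<le> M \<longrightarrow> y (f p + g) = x g" and gl: "p \<le> lvl g'" "lvl g' \<le> p + R - 1"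
    for p y t g'
  proof -
    define y' where "y' = (\<lambda>g. y (f p + g))"
    have "\<forall>g. -M \<le> lvl g \<and> lvl g \<le> M \<longrightarrow> y' g = x g" using yb unfolding y'_def by simp
    hence "\<forall>g. 0 \<le> lvl g \<and> lvl g \<le> R - 1 \<longrightarrow> (\<Phi> ^^ t) y' g = (\<Phi> ^^ t) x g"
      using spec[OF spec[OF blk, of t], of y'] by blast
    moreover have "lvl (f (- p) + g') = - p + lvl g'" by (rule lvl_f)
    ultimately have "(\<Phi> ^^ t) y' (f (- p) + g') = (\<Phi> ^^ t) x (f (- p) + g')" using gl by simp
    moreover have "(\<Phi> ^^ t) y' (f (- p) + g') = (\<Phi> ^^ t) y g'"
      unfolding y'_def CA_shift_pow[OF CA] using f_cancel(2) by simp
    ultimately show ?thesis by simp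
  qed
  show ?thesis
  proof (intro exI[of _ z] allI)
    fix Q :: int
    define q where "q = max Q 0"
    define a where "a = P * q"
    have aQ: "Q \<le> a" "0 \<le> a" unfolding a_def q_def using P1
      by (simp_all add: mult_le_cancel_right1 order_trans[OF _ mult_right_mono[of 1 P]])
    define F' where "F' = {g. -a - M \<le> lvl g \<and> lvl g \<le> a + M}"
    have "finite F'" unfolding F'_def by (rule finite_slab)
    moreover have "\<forall>t y. (\<forall>g\<in>F'. y g = z g) \<longrightarrow> (\<forall>g. \<bar>lvl g\<bar> \<le> Q \<longrightarrow> (\<Phi> ^^ t) y g = (\<Phi> ^^ t) z g)"
    proof (intro allI, rule impI)
      fix t y assume ag: "\<forall>g\<in>F'. y g = z g"
      have zb: "\<forall>g. -M \<le> lvl g \<and> lvl g \<le> M \<longrightarrow> z (f p + g) = x g" if "p = a \<or> p = -a" for p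
      proof -
        have "p = P * q \<or> p = P * (- q)" using that unfolding a_def by auto
        thus ?thesis using zblk by blast
      qed
      have yb: "\<forall>g. -M \<le> lvl g \<and> lvl g \<le> M \<longrightarrow> y (f p + g) = x g" if "p = a \<or> p = -a" for p
      proof (intro allI impI)
        fix g assume gl: "-M \<le> lvl g \<and> lvl g \<le> M"
        have "lvl (f p + g) = p + lvl g" by (rule lvl_f)
        hence "f p + g \<in> F'" using gl that aQ unfolding F'_def by auto
        thus "y (f p + g) = x g" using ag zb[OF that] gl by simp
      qed
      have blocks: "(\<Phi> ^^ t) y g = (\<Phi> ^^ t) z g"
        if "p = a \<or> p = -a" "p \<le> lvl g" "lvl g \<le> p + R - 1" for p t g
        using shiftblk[OF yb[OF that(1)] that(2,3)] shiftblk[OF zb[OF that(1)] that(2,3)] by simp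
      have main: "\<forall>g. -a \<le> lvl g \<and> lvl g \<le> a + R - 1 \<longrightarrow> (\<Phi> ^^ t) y g = (\<Phi> ^^ t) z g" for t
      proof (induct t)
        case 0
        show ?case
        proof (intro allI impI)
          fix g assume "-a \<le> lvl g \<and> lvl g \<le> a + R - 1"
          hence "g \<in> F'" unfolding F'_def using MR R1 aQ(2) by auto
          thus "(\<Phi> ^^ 0) y g = (\<Phi> ^^ 0) z g" using ag by simp
        qed
      next
        case (Suc t)
        show ?case
        proof (intro allI impI)
          fix g assume gl: "-a \<le> lvl g \<and> lvl g \<le> a + R - 1"
          show "(\<Phi> ^^ Suc t) y g = (\<Phi> ^^ Suc t) z g"
          proof (cases "lvl g \<le> -a + R - 1 \<or> a \<le> lvl g")
            case True
            thus ?thesis using blocks[of "-a" g "Suc t"] blocks[of a g "Suc t"] gl by auto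
          next
            case False
            have "\<forall>s\<in>S. (\<Phi> ^^ t) y (g + s) = (\<Phi> ^^ t) z (g + s)"
            proof
              fix s assume "s \<in> S"
              hence "\<bar>lvl (g + s) - lvl g\<bar> \<le> R" using R by blast
              hence "-a \<le> lvl (g + s) \<and> lvl (g + s) \<le> a + R - 1" using False by auto
              thus "(\<Phi> ^^ t) y (g + s) = (\<Phi> ^^ t) z (g + s)" using Suc by blast
            qed
            hence "\<Phi> ((\<Phi> ^^ t) y) g = \<Phi> ((\<Phi> ^^ t) z) g" by (rule CA_local[OF CA])
            thus ?thesis by simp
          qed
        qed
      qed
      show "\<forall>g. \<bar>lvl g\<bar> \<le> Q \<longrightarrow> (\<Phi> ^^ t) y g = (\<Phi> ^^ t) z g"
      proof (intro allI impI)
        fix g assume "\<bar>lvl g\<bar> \<le> Q"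
        hence "-a \<le> lvl g \<and> lvl g \<le> a + R - 1" using aQ R1 by auto
        thus "(\<Phi> ^^ t) y g = (\<Phi> ^^ t) z g" using main[of t] by blast
      qed
    qed
    ultimately show "\<exists>F'. finite F' \<and> (\<forall>t y. (\<forall>g\<in>F'. y g = z g) \<longrightarrow>
            (\<forall>g. \<bar>lvl g\<bar> \<le> Q \<longrightarrow> (\<Phi> ^^ t) y g = (\<Phi> ^^ t) z g))" by blast
  qed
qed

end

theorem theorem1:
  fixes E :: "'g::group_add set"
    and \<Phi> :: "('g \<Rightarrow> 'a::finite) \<Rightarrow> ('g \<Rightarrow> 'a)"
  assumes "fin_sym_gen_set E"
    and "virtually_Z TYPE('g)"
    and "is_CA \<Phi>"
  shows "sensitive E \<Phi> \<longleftrightarrow> \<not> (\<exists>x. equicont_point E \<Phi> x)"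
proof
  assume "sensitive E \<Phi>"
  then obtain \<epsilon> where e: "\<epsilon> > 0" "\<forall>x. \<forall>\<delta>>0. \<exists>t::nat. \<exists>y\<in>cball_conf E x \<delta>.
     (\<Phi> ^^ t) y \<notin> cball_conf E ((\<Phi> ^^ t) x) \<epsilon>" unfolding sensitive_def by blast
  show "\<not> (\<exists>x. equicont_point E \<Phi> x)"
  proof
    assume "\<exists>x. equicont_point E \<Phi> x"
    then obtain x where "equicont_point E \<Phi> x" by blast
    then obtain \<delta> where d: "\<delta> > 0" "\<forall>t. (\<Phi> ^^ t) ` cball_conf E x \<delta> \<subseteq> cball_conf E ((\<Phi> ^^ t) x) \<epsilon>"
      using e(1) unfolding equicont_point_def by blast
    from e(2) d(1) obtain t y where "y \<in> cball_conf E x \<delta>" "(\<Phi> ^^ t) y \<notin> cball_conf E ((\<Phi> ^^ t) x) \<epsilon>"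
      by blast
    thus False using d(2) by blast
  qed
next
  assume noeq: "\<not> (\<exists>x. equicont_point E \<Phi> x)"
  obtain H :: "'g set" and f :: "int \<Rightarrow> 'g" where h1: "is_subgroup H" "finite_index H" "bij_betw f UNIV H" "\<forall>a b. f (a + b) = f a + f b"
    using assms(2) unfolding virtually_Z_def by metis
  interpret vz H f using h1 by unfold_locales auto
  obtain S \<mu> where S: "finite S" and CA: "\<forall>x g. \<Phi> x g = \<mu> (\<lambda>s. if s \<in> S then x (g + s) else undefined)"
    using assms(3) unfolding is_CA_def by blast
  obtain R where R1: "R \<ge> 1" and R: "\<forall>g. \<forall>s\<in>S. \<bar>lvl (g + s) - lvl g\<bar> \<le> R"
    using lip[OF S] by blast
  have half: "(0::real) < 1/2" "(1/2::real) < 1" by simp_all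
  show "sensitive E \<Phi>"
  proof (rule ccontr)
    assume ns0: "\<not> sensitive E \<Phi>"
    have ns: "\<forall>\<epsilon>>0. \<exists>x. \<exists>\<delta>>0. \<forall>t. \<forall>y\<in>cball_conf E x \<delta>. (\<Phi> ^^ t) y \<in> cball_conf E ((\<Phi> ^^ t) x) \<epsilon>"
      using ns0 unfolding sensitive_def by blast
    obtain k where k: "\<forall>g\<in>{g. 0 \<le> lvl g \<and> lvl g \<le> R - 1}. word_len E g < k"
      using finite_in_ball[OF finite_slab] by blast
    obtain x \<delta> where xd: "\<delta> > 0" "\<forall>t. \<forall>y\<in>cball_conf E x \<delta>. (\<Phi> ^^ t) y \<in> cball_conf E ((\<Phi> ^^ t) x) ((1/2)^k)"
      using ns by (metis zero_less_power half(1))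
    obtain m where m: "(1/2::real)^m < \<delta>" using real_arch_pow_inv[OF xd(1) half(2)] by blast
    obtain Q0 where Q0: "\<forall>g\<in>{g. word_len E g < m}. \<bar>lvl g\<bar> \<le> Q0"
      using finite_bdd[OF finite_ballset[OF assms(1)]] by blast
    define M where "M = max Q0 R"
    have blk: "\<forall>t y. (\<forall>g. -M \<le> lvl g \<and> lvl g \<le> M \<longrightarrow> y g = x g) \<longrightarrow>
                (\<forall>g. 0 \<le> lvl g \<and> lvl g \<le> R - 1 \<longrightarrow> (\<Phi> ^^ t) y g = (\<Phi> ^^ t) x g)"
    proof (intro allI impI)
      fix t y g assume ag: "\<forall>g. -M \<le> lvl g \<and> lvl g \<le> M \<longrightarrow> y g = x g" and gl: "0 \<le> lvl g \<and> lvl g \<le> R - 1"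
      have "agreeB E m x y" unfolding agreeB_def
      proof (intro allI impI)
        fix g assume "word_len E g < m"
        hence "\<bar>lvl g\<bar> \<le> Q0" using Q0 by blast
        hence "-M \<le> lvl g \<and> lvl g \<le> M" unfolding M_def by auto
        thus "x g = y g" using ag by simp
      qed
      hence "cdist E x y \<le> (1/2)^m" by (simp add: cdist_le_iff)
      hence "y \<in> cball_conf E x \<delta>" using m unfolding cball_conf_def by simp
      hence "(\<Phi> ^^ t) y \<in> cball_conf E ((\<Phi> ^^ t) x) ((1/2)^k)" using xd(2) by blast
      hence "agreeB E k ((\<Phi> ^^ t) x) ((\<Phi> ^^ t) y)" unfolding cball_conf_def by (simp add: cdist_le_iff)
      thus "(\<Phi> ^^ t) y g = (\<Phi> ^^ t) x g" using k gl unfolding agreeB_def by force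
    qed
    obtain z where z: "\<forall>Q. \<exists>F'. finite F' \<and> (\<forall>t y. (\<forall>g\<in>F'. y g = z g) \<longrightarrow>
            (\<forall>g. \<bar>lvl g\<bar> \<le> Q \<longrightarrow> (\<Phi> ^^ t) y g = (\<Phi> ^^ t) z g))"
      using construct[OF CA R R1 _ blk] unfolding M_def by auto
    have "equicont_point E \<Phi> z"
      unfolding equicont_point_def
    proof (intro allI impI)
      fix \<epsilon> :: real assume "\<epsilon> > 0"
      obtain k where k: "(1/2::real)^k < \<epsilon>" using real_arch_pow_inv[OF \<open>\<epsilon> > 0\<close> half(2)] by blast
      obtain Q where Q: "\<forall>g\<in>{g. word_len E g < k}. \<bar>lvl g\<bar> \<le> Q"
        using finite_bdd[OF finite_ballset[OF assms(1)]] by blast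
      obtain F' where F': "finite F'" "\<forall>t y. (\<forall>g\<in>F'. y g = z g) \<longrightarrow>
            (\<forall>g. \<bar>lvl g\<bar> \<le> Q \<longrightarrow> (\<Phi> ^^ t) y g = (\<Phi> ^^ t) z g)" using z by blast
      obtain m where m: "\<forall>g\<in>F'. word_len E g < m" using finite_in_ball[OF F'(1)] by blast
      show "\<exists>\<delta>>0. \<forall>t. (\<Phi> ^^ t) ` cball_conf E z \<delta> \<subseteq> cball_conf E ((\<Phi> ^^ t) z) \<epsilon>"
      proof (intro exI[of _ "(1/2)^m"] conjI allI subsetI)
        show "(0::real) < (1/2)^m" by simp
        fix t w assume "w \<in> (\<Phi> ^^ t) ` cball_conf E z ((1/2)^m)"
        then obtain y where y: "y \<in> cball_conf E z ((1/2)^m)" "w = (\<Phi> ^^ t) y" by blast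
        have "agreeB E m z y" using y(1) unfolding cball_conf_def by (simp add: cdist_le_iff)
        hence "\<forall>g\<in>F'. y g = z g" using m unfolding agreeB_def by force
        hence "\<forall>g. \<bar>lvl g\<bar> \<le> Q \<longrightarrow> (\<Phi> ^^ t) y g = (\<Phi> ^^ t) z g" using F'(2) by blast
        hence "agreeB E k ((\<Phi> ^^ t) z) ((\<Phi> ^^ t) y)" using Q unfolding agreeB_def by force
        hence "cdist E ((\<Phi> ^^ t) z) w \<le> (1/2)^k" using y(2) by (simp add: cdist_le_iff)
        thus "w \<in> cball_conf E ((\<Phi> ^^ t) z) \<epsilon>" using k unfolding cball_conf_def by simp
      qed
    qed
    thus False using noeq by blast
  qed
qed

end
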